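(* The smallest order $n$ for which there exists a pair of unbiased weighing matrices of order $n$ and weight $9$ is $n=13$.
   Context: A weighing matrix of order $n$ and weight $k$ is an $n\times n$ matrix $W$ with entries in $\{1,-1,0\}$ such that $WW^T=kI_n$. Two weighing matrices $W_1,W_2$ of order $n$ and weight $k$ are unbiased if $\frac{1}{\sqrt{k}}W_1W_2^T$ is also a weighing matrix of order $n$ and weight $k$. *)

theory Defs
  imports Complex_Main
begin

text \<open>An n x n matrix is represented as a function nat => nat => real,
  only the entries with indices i, j < n being relevant.\<close>

definition weighing_matrix :: "nat \<Rightarrow> nat \<Rightarrow> (nat \<Rightarrow> nat \<Rightarrow> real) \<Rightarrow> bool" where
  "weighing_matrix n k W \<longleftrightarrow>
     (\<forall>i<n. \<forall>j<n. W i j \<in> {1, -1, 0}) \<and>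
     (\<forall>i<n. \<forall>j<n. (\<Sum>l<n. W i l * W j l) = (if i = j then real k else 0))"

definition unbiased :: "nat \<Rightarrow> nat \<Rightarrow> (nat \<Rightarrow> nat \<Rightarrow> real) \<Rightarrow> (nat \<Rightarrow> nat \<Rightarrow> real) \<Rightarrow> bool" where
  "unbiased n k W1 W2 \<longleftrightarrow>
     weighing_matrix n k W1 \<and> weighing_matrix n k W2 \<and>
     weighing_matrix n k (\<lambda>i j. (1 / sqrt (real k)) * (\<Sum>l<n. W1 i l * W2 j l))"

end

theory Submission
  imports Defs "Jordan_Normal_Form.Determinant"
begin
definition r1 :: "int list" where "r1 = [1,1,-1,1,1,1,0,-1,0,-1,1,0,0]"
definition r2 :: "int list" where "r2 = [1,-1,1,1,-1,-1,0,0,1,1,0,1,0]"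
definition A1 :: "nat \<Rightarrow> nat \<Rightarrow> int" where "A1 i j = r1 ! ((j + 13 - i) mod 13)"
definition A2 :: "nat \<Rightarrow> nat \<Rightarrow> int" where "A2 i j = r2 ! ((j + 13 - i) mod 13)"
definition Cm :: "nat \<Rightarrow> nat \<Rightarrow> int" where "Cm i j = (\<Sum>l<13. A1 i l * A2 j l) div 3"

lemma chk: "list_all (\<lambda>i. list_all (\<lambda>j.
   A1 i j \<in> {1,-1,0} \<and> A2 i j \<in> {1,-1,0} \<and> Cm i j \<in> {1,-1,0} \<and>
   (\<Sum>l<13. A1 i l * A1 j l) = (if i = j then 9 else 0) \<and>
   (\<Sum>l<13. A2 i l * A2 j l) = (if i = j then 9 else 0) \<and>
   (\<Sum>l<13. A1 i l * A2 j l) = 3 * Cm i j \<and>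
   (\<Sum>l<13. Cm i l * Cm j l) = (if i = j then 9 else 0)) [0..<13]) [0..<13]"
  unfolding A1_def A2_def Cm_def r1_def r2_def by code_simp

lemma list_all2_forall: "list_all (\<lambda>i. list_all (\<lambda>j. P i j) [0..<n]) [0..<n] \<Longrightarrow> \<forall>i<n. \<forall>j<n. P i j"
  by (simp add: list_all_iff)

lemma wm_int:
  assumes "\<forall>i<n. \<forall>j<n. A i j \<in> {1,-1,0} \<and> (\<Sum>l<n. A i l * A j l) = (if i=j then int k else 0)"
  shows "weighing_matrix n k (\<lambda>i j. real_of_int (A i j))"
  unfolding weighing_matrix_def
proof (intro conjI allI impI)
  fix i j assume "i<n" "j<n"
  then have h: "A i j \<in> {1,-1,0} \<and> (\<Sum>l<n. A i l * A j l) = (if i=j then int k else 0)" using assms by blast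
  then show "real_of_int (A i j) \<in> {1,-1,0}" by auto
  have "(\<Sum>l<n. real_of_int (A i l) * real_of_int (A j l)) = real_of_int (\<Sum>l<n. A i l * A j l)" by simp
  also have "\<dots> = (if i = j then real k else 0)" using h by simp
  finally show "(\<Sum>l<n. real_of_int (A i l) * real_of_int (A j l)) = (if i = j then real k else 0)" .
qed

lemma wm_cong: "(\<forall>i<n. \<forall>j<n. F i j = G i j) \<Longrightarrow> weighing_matrix n k F = weighing_matrix n k G"
  unfolding weighing_matrix_def by (auto intro!: sum.cong)

lemma existence: "\<exists>W1 W2. unbiased 13 9 W1 W2"
proof -
  have H: "\<forall>i<13. \<forall>j<13. A1 i j \<in> {1,-1,0} \<and> A2 i j \<in> {1,-1,0} \<and> Cm i j \<in> {1,-1,0} \<and>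
   (\<Sum>l<13. A1 i l * A1 j l) = (if i = j then 9 else 0) \<and>
   (\<Sum>l<13. A2 i l * A2 j l) = (if i = j then 9 else 0) \<and>
   (\<Sum>l<13. A1 i l * A2 j l) = 3 * Cm i j \<and>
   (\<Sum>l<13. Cm i l * Cm j l) = (if i = j then 9 else 0)"
    by (rule list_all2_forall[OF chk])
  let ?W1 = "\<lambda>i j. real_of_int (A1 i j)"
  let ?W2 = "\<lambda>i j. real_of_int (A2 i j)"
  have s: "sqrt (real 9) = 3" by (simp add: real_sqrt_eq_iff)
  have 1: "weighing_matrix 13 9 ?W1" by (rule wm_int) (use H in auto)
  have 2: "weighing_matrix 13 9 ?W2" by (rule wm_int) (use H in auto)
  have 3: "weighing_matrix 13 9 (\<lambda>i j. real_of_int (Cm i j))" by (rule wm_int) (use H in auto)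
  have eq: "\<forall>i<13. \<forall>j<13. (1 / sqrt (real 9)) * (\<Sum>l<13. ?W1 i l * ?W2 j l) = real_of_int (Cm i j)"
  proof (intro allI impI)
    fix i j :: nat assume "i<13" "j<13"
    then have "(\<Sum>l<13. A1 i l * A2 j l) = 3 * Cm i j" using H by blast
    then have "(\<Sum>l<13. ?W1 i l * ?W2 j l) = 3 * real_of_int (Cm i j)"
      by (metis (no_types, lifting) of_int_mult of_int_numeral of_int_sum sum.cong)
    then show "(1 / sqrt (real 9)) * (\<Sum>l<13. ?W1 i l * ?W2 j l) = real_of_int (Cm i j)" using s by simp
  qed
  have "unbiased 13 9 ?W1 ?W2"
    unfolding unbiased_def using 1 2 3 wm_cong[OF eq] by simp
  then show ?thesis by blast
qed


lemma set_Suc: "{l. l < Suc n \<and> P l} = (if P n then insert n {l. l<n \<and> P l} else {l. l<n \<and> P l})"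
  by (auto simp: less_Suc_eq)

lemma sumsq_card:
  fixes f :: "nat \<Rightarrow> real"
  shows "\<forall>l<n. f l \<in> {1,-1,0} \<Longrightarrow> (\<Sum>l<n. f l * f l) = real (card {l. l<n \<and> f l \<noteq> 0})"
proof (induction n)
  case 0 then show ?case by simp
next
  case (Suc n)
  then have IH: "(\<Sum>l<n. f l * f l) = real (card {l. l<n \<and> f l \<noteq> 0})" by simp
  have "f n \<in> {1,-1,0}" using Suc.prems by simp
  then show ?case using IH by (auto simp: set_Suc)
qed

lemma parity_sum:
  fixes f g :: "nat \<Rightarrow> real"
  shows "\<forall>l<n. f l \<in> {1,-1,0} \<Longrightarrow> \<forall>l<n. g l \<in> {1,-1,0} \<Longrightarrow>
    \<exists>s::int. (\<Sum>l<n. f l * g l) = of_int s \<and> (even s \<longleftrightarrow> even (card {l. l<n \<and> f l \<noteq> 0 \<and> g l \<noteq> 0}))"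
proof (induction n)
  case 0 then show ?case by (intro exI[of _ 0]) simp
next
  case (Suc n)
  then obtain s where s: "(\<Sum>l<n. f l * g l) = of_int s"
     "(even s \<longleftrightarrow> even (card {l. l<n \<and> f l \<noteq> 0 \<and> g l \<noteq> 0}))" by auto
  have fn: "f n \<in> {1,-1,0}" "g n \<in> {1,-1,0}" using Suc.prems by auto
  show ?case
  proof (cases "f n \<noteq> 0 \<and> g n \<noteq> 0")
    case True
    then have "f n * g n = 1 \<or> f n * g n = -1" using fn by auto
    then obtain t :: int where t: "f n * g n = of_int t" "odd t" by (metis odd_one even_minus of_int_1 of_int_minus)
    have "card {l. l < Suc n \<and> f l \<noteq> 0 \<and> g l \<noteq> 0} = Suc (card {l. l<n \<and> f l \<noteq> 0 \<and> g l \<noteq> 0})"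
      using True by (simp add: set_Suc)
    then show ?thesis using s t by (intro exI[of _ "s + t"]) auto
  next
    case False
    then have "f n * g n = 0" by auto
    moreover have "{l. l < Suc n \<and> f l \<noteq> 0 \<and> g l \<noteq> 0} = {l. l<n \<and> f l \<noteq> 0 \<and> g l \<noteq> 0}"
      using False by (auto simp: less_Suc_eq)
    ultimately show ?thesis using s by (intro exI[of _ s]) auto
  qed
qed

lemma col_sum:
  assumes W: "weighing_matrix n k W" and k: "0 < k" and j: "j < n"
  shows "(\<Sum>i<n. W i j * W i j) = real k"
proof -
  define A where "A = mat n n (\<lambda>(i,j). W i j)"
  define B where "B = (1 / real k) \<cdot>\<^sub>m transpose_mat A"
  have A: "A \<in> carrier_mat n n" and B: "B \<in> carrier_mat n n" unfolding A_def B_def by auto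
  have orth: "\<forall>i<n. \<forall>j<n. (\<Sum>l<n. W i l * W j l) = (if i = j then real k else 0)"
    using W unfolding weighing_matrix_def by blast
  have "A * B = 1\<^sub>m n"
  proof (rule eq_matI)
    fix i j assume ij: "i < dim_row (1\<^sub>m n)" "j < dim_col (1\<^sub>m n)"
    then have "(A * B) $$ (i,j) = (\<Sum>l<n. W i l * ((1 / real k) * W j l))"
      unfolding A_def B_def by (auto simp: scalar_prod_def atLeast0LessThan intro!: sum.cong)
    also have "\<dots> = (1 / real k) * (\<Sum>l<n. W i l * W j l)"
      by (simp add: sum_distrib_left algebra_simps)
    also have "\<dots> = 1\<^sub>m n $$ (i,j)" using orth ij k by auto
    finally show "(A * B) $$ (i,j) = 1\<^sub>m n $$ (i,j)" .
  qed (auto simp: A_def B_def)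
  then have BA: "B * A = 1\<^sub>m n" by (rule mat_mult_left_right_inverse[OF A B])
  have "(B * A) $$ (j,j) = (1 / real k) * (\<Sum>i<n. W i j * W i j)"
    using j unfolding A_def B_def
    by (auto simp: scalar_prod_def atLeast0LessThan sum_distrib_left intro!: sum.cong)
  then show ?thesis using BA j k by (auto simp: field_simps)
qed


definition adj :: "nat \<Rightarrow> (nat \<Rightarrow> nat set) \<Rightarrow> nat \<Rightarrow> nat \<Rightarrow> bool" where
  "adj n Z u v \<longleftrightarrow> u \<noteq> v \<and> (\<exists>b<n. u \<in> Z b \<and> v \<in> Z b)"

lemma evenmeet:
  assumes "even (card (A \<inter> B))" "x \<in> A" "x \<in> B" "A \<subseteq> {x,y,w}"
  shows "y \<in> B \<or> w \<in> B"
proof (rule ccontr)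
  assume "\<not> (y \<in> B \<or> w \<in> B)"
  then have "A \<inter> B = {x}" using assms by auto
  then show False using assms(1) by simp
qed

lemma card3_two:
  assumes "card A = 3" "u \<in> A" "z \<in> A" "u \<noteq> z"
  shows "\<exists>c. A = {u,z,c} \<and> c \<noteq> u \<and> c \<noteq> z"
proof -
  obtain x y w where A: "A = {x,y,w}" "x \<noteq> y" "y \<noteq> w" "x \<noteq> w"
    using assms(1) card_3_iff by metis
  show ?thesis using assms(2-4) A by auto
qed

lemma card3_one:
  assumes "card A = 3" "p \<in> A"
  shows "\<exists>x y. A = {p,x,y} \<and> x \<noteq> p \<and> x \<noteq> y \<and> y \<noteq> p"
proof -
  obtain x y w where A: "A = {x,y,w}" "x \<noteq> y" "y \<noteq> w" "x \<noteq> w"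
    using assms(1) card_3_iff by metis
  show ?thesis using assms(2) A by auto
qed

lemma card3_third:
  assumes "card S = 3" "b \<in> S" "b' \<in> S"
  shows "\<exists>e\<in>S. e \<noteq> b \<and> e \<noteq> b'"
proof -
  obtain x y w where A: "S = {x,y,w}" "x \<noteq> y" "y \<noteq> w" "x \<noteq> w"
    using assms(1) card_3_iff by metis
  show ?thesis using assms(2-3) A by auto
qed

lemma card3_other:
  assumes "card S = 3" "b \<in> S"
  shows "\<exists>e\<in>S. e \<noteq> b"
  using card3_third[OF assms assms(2)] by blast

lemma card3_eq:
  assumes "card S = 3" "b \<in> S" "b' \<in> S" "b'' \<in> S" "b \<noteq> b'" "b \<noteq> b''" "b' \<noteq> b''"
  shows "S = {b,b',b''}"
proof -
  have "{b,b',b''} \<subseteq> S" using assms by auto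
  moreover have "card {b,b',b''} = 3" using assms by auto
  moreover have "finite S" using assms(1) by (metis card.infinite zero_neq_numeral)
  ultimately show ?thesis using assms(1) by (metis card_subset_eq)
qed

locale fam =
  fixes n :: nat and Z :: "nat \<Rightarrow> nat set"
  assumes Zc: "\<And>b. b<n \<Longrightarrow> Z b \<subseteq> {..<n} \<and> card (Z b) = 3"
  and E: "\<And>b b'. b<n \<Longrightarrow> b'<n \<Longrightarrow> b\<noteq>b' \<Longrightarrow> even (card (Z b \<inter> Z b'))"
  and C: "\<And>p. p<n \<Longrightarrow> card {b. b<n \<and> p \<in> Z b} = 3"
begin

lemma notsub: assumes "b<n" "b'<n" "b\<noteq>b'" "Z b \<subseteq> Z b'" shows False
proof -
  have fin: "finite (Z b')" using Zc[OF assms(2)] by (meson finite_lessThan finite_subset)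
  have "Z b = Z b'" by (rule card_subset_eq[OF fin assms(4)]) (simp add: Zc assms(1,2))
  then have "Z b \<inter> Z b' = Z b" by simp
  then show False using E[OF assms(1-3)] Zc[OF assms(1)] by simp
qed

lemma K2:
  assumes p: "p < n"
  shows "\<exists>x y w. distinct [p,x,y,w] \<and> adj n Z p x \<and> adj n Z p y \<and> adj n Z p w"
proof -
  have cS: "card {b. b<n \<and> p \<in> Z b} = 3" using C[OF p] .
  have ne: "{b. b<n \<and> p \<in> Z b} \<noteq> {}" using cS by (metis card.empty numeral_neq_zero)
  then obtain b1 where b1: "b1 \<in> {b. b<n \<and> p \<in> Z b}" by blast
  obtain b2 where b2: "b2 \<in> {b. b<n \<and> p \<in> Z b}" "b2 \<noteq> b1" using card3_other[OF cS b1] by blast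
  have c1: "card (Z b1) = 3" using Zc b1 by auto
  obtain x y where xy: "Z b1 = {p,x,y}" "x \<noteq> p" "x \<noteq> y" "y \<noteq> p"
    using card3_one[OF c1] b1 by blast
  have "\<not> Z b2 \<subseteq> Z b1" using notsub b1 b2 by auto
  then obtain w where w: "w \<in> Z b2" "w \<notin> Z b1" by blast
  have a1: "adj n Z p x" unfolding adj_def using xy b1 by blast
  have a2: "adj n Z p y" unfolding adj_def using xy b1 by blast
  have a3: "adj n Z p w" unfolding adj_def using w b2 xy by blast
  have d: "distinct [p,x,y,w]" using xy w by auto
  show ?thesis using a1 a2 a3 d by blast
qed

lemma adj_lt: "adj n Z u v \<Longrightarrow> u < n \<and> v < n"
  unfolding adj_def using Zc by blast

lemma adj_sym: "adj n Z u v \<Longrightarrow> adj n Z v u"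
  unfolding adj_def by blast

lemma K1:
  assumes uz: "adj n Z u z" and vz: "adj n Z v z" and uv: "u \<noteq> v"
  shows "adj n Z u v"
proof -
  obtain b where b: "b<n" "u \<in> Z b" "z \<in> Z b" "u \<noteq> z" using uz unfolding adj_def by blast
  obtain b' where b': "b'<n" "v \<in> Z b'" "z \<in> Z b'" "v \<noteq> z" using vz unfolding adj_def by blast
  have zn: "z < n" using Zc[OF b(1)] b(3) by blast
  have un: "u < n" using Zc[OF b(1)] b(2) by blast
  show ?thesis
  proof (rule ccontr)
    assume nadj: "\<not> adj n Z u v"
    have nv: "v \<notin> Z b" using nadj b uv unfolding adj_def by blast
    have nu: "u \<notin> Z b'" using nadj b' uv unfolding adj_def by blast
    have bb': "b \<noteq> b'" using nu b(2) by blast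
    have cb3: "card (Z b) = 3" using Zc[OF b(1)] by blast
    obtain c where c: "Z b = {u,z,c}" "c \<noteq> u" "c \<noteq> z" using card3_two[OF cb3 b(2) b(3) b(4)] by blast
    have "u \<in> Z b' \<or> c \<in> Z b'"
      by (rule evenmeet[OF E[OF b(1) b'(1) bb'] b(3) b'(3)]) (simp add: c(1))
    then have cb': "c \<in> Z b'" using nu by blast
    have cv: "c \<noteq> v" using c(1) nv by blast
    have Sz: "card {e. e<n \<and> z \<in> Z e} = 3" using C[OF zn] .
    have bin: "b \<in> {e. e<n \<and> z \<in> Z e}" using b by blast
    have b'in: "b' \<in> {e. e<n \<and> z \<in> Z e}" using b' by blast
    obtain b'' where b''0: "b'' \<in> {e. e<n \<and> z \<in> Z e}" "b'' \<noteq> b" "b'' \<noteq> b'"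
      using card3_third[OF Sz bin b'in] by blast
    then have b'': "b''<n" "z \<in> Z b''" by auto
    show False
    proof (cases "c \<in> Z b''")
      case True
      have cn: "c < n" using Zc[OF b(1)] c(1) by blast
      have Sc: "card {e. e<n \<and> c \<in> Z e} = 3" using C[OF cn] .
      have Sc_eq: "{e. e<n \<and> c \<in> Z e} = {b,b',b''}"
        by (rule card3_eq[OF Sc]) (use b b' b'' b''0 bb' True c cb' in auto)
      have Sz_eq: "{e. e<n \<and> z \<in> Z e} = {b,b',b''}"
        by (rule card3_eq[OF Sz bin b'in b''0(1) bb']) (use b''0 in auto)
      have Su: "card {e. e<n \<and> u \<in> Z e} = 3" using C[OF un] .
      have buin: "b \<in> {e. e<n \<and> u \<in> Z e}" using b by blast
      obtain f where f0: "f \<in> {e. e<n \<and> u \<in> Z e}" "f \<noteq> b" using card3_other[OF Su buin] by blast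
      then have f: "f<n" "u \<in> Z f" by auto
      have "z \<in> Z f \<or> c \<in> Z f"
        by (rule evenmeet[OF E[OF b(1) f(1)] b(2) f(2)]) (use f0 c in auto)
      then have "f \<in> {b,b',b''}" using Sc_eq Sz_eq f(1) by blast
      then have "f = b''" using f0(2) f(2) nu by blast
      then have "Z b \<subseteq> Z b''" using f(2) True b''(2) c(1) by auto
      then show False using notsub b(1) b''(1) b''0(2) by blast
    next
      case False
      have "z \<in> Z b''" by (rule b''(2))
      have "u \<in> Z b'' \<or> c \<in> Z b''"
        by (rule evenmeet[OF E[OF b(1) b''(1)] b(3) b''(2)]) (use b''0 c in auto)
      then have ub'': "u \<in> Z b''" using False by blast
      have cb'3: "card (Z b') = 3" using Zc[OF b'(1)] by blast
      obtain c' where c': "Z b' = {v,z,c'}" "c' \<noteq> v" "c' \<noteq> z"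
        using card3_two[OF cb'3 b'(2) b'(3) b'(4)] by blast
      have "c' = c" using c' cb' cv c(3) by blast
      then have "v \<in> Z b'' \<or> c \<in> Z b''"
        using evenmeet[OF E[OF b'(1) b''(1)] b'(3) b''(2), of v c] c' b''0 by auto
      then have "v \<in> Z b''" using False by blast
      then show False using nadj b''(1) ub'' uv unfolding adj_def by blast
    qed
  qed
qed

end


lemma cnt1: "card {l. l<n \<and> P l} + card {l. l<n \<and> \<not> P l} = n"
proof -
  have "card ({l. l<n \<and> P l} \<union> {l. l<n \<and> \<not> P l}) = card {l. l<n \<and> P l} + card {l. l<n \<and> \<not> P l}"
    by (rule card_Un_disjoint) auto
  moreover have "{l. l<n \<and> P l} \<union> {l. l<n \<and> \<not> P l} = {..<n}" by auto
  ultimately show ?thesis by simp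
qed

lemma cnt2: "card {l. l<n \<and> P l \<and> Q l} + n =
   card {l. l<n \<and> P l} + card {l. l<n \<and> Q l} + card {l. l<n \<and> \<not> P l \<and> \<not> Q l}"
proof -
  have e1: "card ({l. l<n \<and> P l} \<union> {l. l<n \<and> Q l}) + card ({l. l<n \<and> P l} \<inter> {l. l<n \<and> Q l})
        = card {l. l<n \<and> P l} + card {l. l<n \<and> Q l}"
    by (rule card_Un_Int[symmetric]) auto
  have e2: "{l. l<n \<and> P l} \<inter> {l. l<n \<and> Q l} = {l. l<n \<and> P l \<and> Q l}" by auto
  have e3: "{l. l<n \<and> P l} \<union> {l. l<n \<and> Q l} = {l. l<n \<and> (P l \<or> Q l)}" by auto
  have e4: "card {l. l<n \<and> (P l \<or> Q l)} + card {l. l<n \<and> \<not> (P l \<or> Q l)} = n" by (rule cnt1)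
  have e5: "{l. l<n \<and> \<not> (P l \<or> Q l)} = {l. l<n \<and> \<not> P l \<and> \<not> Q l}" by auto
  have A: "card {l. l<n \<and> (P l \<or> Q l)} + card {l. l<n \<and> P l \<and> Q l} = card {l. l<n \<and> P l} + card {l. l<n \<and> Q l}"
    using e1 unfolding e2 e3 .
  have B: "card {l. l<n \<and> (P l \<or> Q l)} + card {l. l<n \<and> \<not> P l \<and> \<not> Q l} = n"
    using e4 unfolding e5 .
  show ?thesis using A B by linarith
qed

lemma sum_ind: assumes "finite A" shows "(\<Sum>x\<in>A. (if P x then 1 else 0::nat)) = card {x\<in>A. P x}"
proof -
  have "card {x\<in>A. P x} = sum (\<lambda>x. 1::nat) {x\<in>A. P x}" by (rule card_eq_sum)
  also have "\<dots> = (\<Sum>x\<in>A. if P x then 1 else 0)" by (rule sum.inter_filter[OF assms])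
  finally show ?thesis by simp
qed


lemma Fder:
  assumes f2: "fam 12 Z2" and Za: "Za \<subseteq> {..<12}" "card Za = 3"
  and odd9: "card {b. b<12 \<and> odd (card (Za \<inter> Z2 b))} = 9"
  shows "\<forall>b<12. card (Za \<inter> Z2 b) \<le> 1"
proof -
  interpret B: fam 12 Z2 by fact
  have finZa: "finite Za" using Za(1) finite_subset by blast
  have "(\<Sum>b<12. card (Za \<inter> Z2 b)) = (\<Sum>b<(12::nat). \<Sum>p\<in>Za. (if p \<in> Z2 b then 1 else 0::nat))"
  proof (rule sum.cong[OF refl])
    fix b show "card (Za \<inter> Z2 b) = (\<Sum>p\<in>Za. (if p \<in> Z2 b then 1 else 0::nat))"
      using sum_ind[OF finZa, of "\<lambda>p. p \<in> Z2 b"] by (simp add: Int_def)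
  qed
  also have "\<dots> = (\<Sum>p\<in>Za. \<Sum>b<(12::nat). (if p \<in> Z2 b then 1 else 0::nat))"
    by (rule sum.swap)
  also have "\<dots> = (\<Sum>p\<in>Za. (3::nat))"
  proof (rule sum.cong[OF refl])
    fix p assume "p \<in> Za"
    then have p: "p < 12" using Za by auto
    have "(\<Sum>b<(12::nat). (if p \<in> Z2 b then 1 else 0::nat)) = card {b\<in>{..<12}. p \<in> Z2 b}"
      by (rule sum_ind) simp
    also have "{b\<in>{..<12}. p \<in> Z2 b} = {b. b<12 \<and> p \<in> Z2 b}" by auto
    finally show "(\<Sum>b<(12::nat). (if p \<in> Z2 b then 1 else 0::nat)) = 3" using B.C[OF p] by simp
  qed
  also have "\<dots> = 9" using Za by simp
  finally have S: "(\<Sum>b<12. card (Za \<inter> Z2 b)) = 9" .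
  show ?thesis
  proof (rule ccontr)
    assume "\<not> (\<forall>b<12. card (Za \<inter> Z2 b) \<le> 1)"
    then obtain b0 where b0: "b0 < 12" "card (Za \<inter> Z2 b0) \<ge> 2" by auto
    let ?t = "\<lambda>b. card (Za \<inter> Z2 b)"
    have le: "(\<Sum>b<12. (if odd (?t b) then 1 else 0) + (if b = b0 then 2 else 0)) \<le> (\<Sum>b<12. ?t b)"
    proof (rule sum_mono)
      fix b assume "b \<in> {..<(12::nat)}"
      show "(if odd (?t b) then 1 else 0) + (if b = b0 then 2 else 0) \<le> ?t b"
      proof (cases "b = b0")
        case True
        have "3 \<le> ?t b0" if o: "odd (?t b0)"
        proof -
          obtain k where "?t b0 = 2*k+1" using o by (rule oddE)
          then show ?thesis using b0(2) by (cases k) auto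
        qed
        then show ?thesis using b0 True by auto
      next
        case False
        then show ?thesis using odd_pos[of "?t b"] by auto
      qed
    qed
    have "(\<Sum>b<(12::nat). (if odd (?t b) then 1 else 0::nat)) = card {b\<in>{..<12}. odd (?t b)}"
      by (rule sum_ind) simp
    also have "{b\<in>{..<12}. odd (?t b)} = {b. b<12 \<and> odd (?t b)}" by auto
    finally have s1: "(\<Sum>b<(12::nat). (if odd (?t b) then 1 else 0::nat)) = 9" using odd9 by simp
    have s2: "(\<Sum>b<(12::nat). (if b = b0 then 2 else 0::nat)) = 2"
      using sum.delta[of "{..<(12::nat)}" b0 "\<lambda>_. (2::nat)"] b0(1) by simp
    have "(\<Sum>b<12. (if odd (?t b) then 1 else 0) + (if b = b0 then 2 else 0)) = (11::nat)"
      unfolding sum.distrib s1 s2 by simp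
    then show False using le S by linarith
  qed
qed

lemma comb12:
  assumes f1: "fam 12 Z1" and f2: "fam 12 Z2"
  and F: "\<forall>a<12. \<forall>b<12. card (Z1 a \<inter> Z2 b) \<le> 1"
  shows False
proof -
  interpret A: fam 12 Z1 by fact
  interpret B: fam 12 Z2 by fact
  have noboth: False if h1: "adj 12 Z1 u v" and h2: "adj 12 Z2 u v" for u v
  proof -
    obtain a where a: "a<12" "u \<in> Z1 a" "v \<in> Z1 a" "u \<noteq> v" using h1 unfolding adj_def by blast
    obtain b where b: "b<12" "u \<in> Z2 b" "v \<in> Z2 b" using h2 unfolding adj_def by blast
    have fin: "finite (Z1 a \<inter> Z2 b)" using A.Zc[OF a(1)] finite_subset by blast
    have "{u,v} \<subseteq> Z1 a \<inter> Z2 b" using a b by blast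
    then have "card {u,v} \<le> card (Z1 a \<inter> Z2 b)" by (rule card_mono[OF fin])
    moreover have "card {u,v} = 2" using a(4) by simp
    moreover have "card (Z1 a \<inter> Z2 b) \<le> 1" using F a(1) b(1) by blast
    ultimately show False by linarith
  qed
  obtain x y w where xyw: "distinct [0,x,y,w]" "adj 12 Z1 0 x" "adj 12 Z1 0 y" "adj 12 Z1 0 w"
    using A.K2[of 0] by auto
  have axy: "adj 12 Z1 x y" using A.K1[OF A.adj_sym[OF xyw(2)] A.adj_sym[OF xyw(3)]] xyw(1) by simp
  have axw: "adj 12 Z1 x w" using A.K1[OF A.adj_sym[OF xyw(2)] A.adj_sym[OF xyw(4)]] xyw(1) by simp
  have ayw: "adj 12 Z1 y w" using A.K1[OF A.adj_sym[OF xyw(3)] A.adj_sym[OF xyw(4)]] xyw(1) by simp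
  define N where "N u = {v. v = u \<or> adj 12 Z2 u v}" for u
  have Nsub: "N u \<subseteq> {..<12}" if "u < 12" for u
    using that B.adj_lt unfolding N_def by auto
  have Ncard: "4 \<le> card (N u)" if u: "u < 12" for u
  proof -
    obtain x' y' w' where h: "distinct [u,x',y',w']" "adj 12 Z2 u x'" "adj 12 Z2 u y'" "adj 12 Z2 u w'"
      using B.K2[OF u] by auto
    have "{u,x',y',w'} \<subseteq> N u" using h unfolding N_def by auto
    moreover have "finite (N u)" using Nsub[OF u] finite_subset by blast
    ultimately have "card {u,x',y',w'} \<le> card (N u)" by (rule card_mono[rotated])
    moreover have "card {u,x',y',w'} = 4" using h(1) by simp
    ultimately show ?thesis by simp
  qed
  have disj: "N u \<inter> N v = {}" if h: "adj 12 Z1 u v" for u v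
  proof (rule ccontr)
    assume "N u \<inter> N v \<noteq> {}"
    then obtain t where t: "t = u \<or> adj 12 Z2 u t" "t = v \<or> adj 12 Z2 v t" unfolding N_def by auto
    have uv: "u \<noteq> v" using h unfolding adj_def by blast
    show False
    proof (cases "t = u")
      case True
      then have "adj 12 Z2 v u" using t uv by auto
      then show False using noboth[OF h B.adj_sym] by blast
    next
      case False
      then have tu: "adj 12 Z2 u t" using t by auto
      show False
      proof (cases "t = v")
        case True then show False using tu noboth[OF h] by blast
      next
        case False
        then have "adj 12 Z2 v t" using t by auto
        then have "adj 12 Z2 u v" using B.K1[OF tu] uv by blast
        then show False using noboth[OF h] by blast
      qed
    qed
  qed
  have lt: "x < 12" "y < 12" "w < 12" using A.adj_lt xyw by auto
  have fin: "finite (N u)" if "u<12" for u using Nsub[OF that] finite_subset by blast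
  have d1: "N 0 \<inter> N x = {}" "N 0 \<inter> N y = {}" "N 0 \<inter> N w = {}" "N x \<inter> N y = {}"
     "N x \<inter> N w = {}" "N y \<inter> N w = {}"
    using disj[OF xyw(2)] disj[OF xyw(3)] disj[OF xyw(4)] disj[OF axy] disj[OF axw] disj[OF ayw] by auto
  have f0: "finite (N 0)" "finite (N x)" "finite (N y)" "finite (N w)" using fin lt by auto
  have c1: "card (N 0 \<union> N x) = card (N 0) + card (N x)" using card_Un_disjoint[OF f0(1,2) d1(1)] .
  have c2: "card (N 0 \<union> N x \<union> N y) = card (N 0 \<union> N x) + card (N y)"
    by (rule card_Un_disjoint) (use f0 d1 in auto)
  have c3: "card (N 0 \<union> N x \<union> N y \<union> N w) = card (N 0 \<union> N x \<union> N y) + card (N w)"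
    by (rule card_Un_disjoint) (use f0 d1 in auto)
  have "card (N 0 \<union> N x \<union> N y \<union> N w) = card (N 0) + card (N x) + card (N y) + card (N w)"
    using c1 c2 c3 by simp
  moreover have "N 0 \<union> N x \<union> N y \<union> N w \<subseteq> {..<12}" using Nsub lt by auto
  then have "card (N 0 \<union> N x \<union> N y \<union> N w) \<le> 12"
    by (metis card_lessThan card_mono finite_lessThan)
  moreover have "4 \<le> card (N 0)" "4 \<le> card (N x)" "4 \<le> card (N y)" "4 \<le> card (N w)"
    using Ncard lt by auto
  ultimately show False by linarith
qed


lemma wm_ent: "weighing_matrix n k W \<Longrightarrow> i<n \<Longrightarrow> j<n \<Longrightarrow> W i j \<in> {1,-1,0}"
  by (simp add: weighing_matrix_def)

lemma wm_row: assumes W: "weighing_matrix n k W" and i: "i<n"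
  shows "card {l. l<n \<and> W i l \<noteq> 0} = k"
proof -
  have "(\<Sum>l<n. W i l * W i l) = real k" using W i unfolding weighing_matrix_def by simp
  moreover have "(\<Sum>l<n. W i l * W i l) = real (card {l. l<n \<and> W i l \<noteq> 0})"
    by (rule sumsq_card) (use wm_ent[OF W i] in blast)
  ultimately show ?thesis by simp
qed

lemma wm_col: assumes W: "weighing_matrix n k W" and k: "0<k" and j: "j<n"
  shows "card {i. i<n \<and> W i j \<noteq> 0} = k"
proof -
  have "(\<Sum>i<n. W i j * W i j) = real k" by (rule col_sum[OF W k j])
  moreover have "(\<Sum>i<n. W i j * W i j) = real (card {i. i<n \<and> W i j \<noteq> 0})"
    by (rule sumsq_card) (use wm_ent[OF W _ j] in blast)
  ultimately show ?thesis by simp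
qed

lemma wm_orth: assumes W: "weighing_matrix n k W" and i: "i<n" "i'<n" "i\<noteq>i'"
  shows "even (card {l. l<n \<and> W i l \<noteq> 0 \<and> W i' l \<noteq> 0})"
proof -
  obtain s where s: "(\<Sum>l<n. W i l * W i' l) = of_int s"
    "(even s \<longleftrightarrow> even (card {l. l<n \<and> W i l \<noteq> 0 \<and> W i' l \<noteq> 0}))"
    using parity_sum[of n "W i" "W i'"] wm_ent[OF W] i by blast
  have "(\<Sum>l<n. W i l * W i' l) = 0" using W i unfolding weighing_matrix_def by simp
  then have "s = 0" using s(1) by simp
  then show ?thesis using s(2) by simp
qed

lemma unb_odd: assumes U: "unbiased n 9 W1 W2" and a: "a<n"
  shows "card {b. b<n \<and> odd (card {l. l<n \<and> W1 a l \<noteq> 0 \<and> W2 b l \<noteq> 0})} = 9"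
proof -
  define M where "M = (\<lambda>i j. (1 / sqrt (real 9)) * (\<Sum>l<n. W1 i l * W2 j l))"
  have W1: "weighing_matrix n 9 W1" and W2: "weighing_matrix n 9 W2"
    and WM: "weighing_matrix n 9 M" using U unfolding unbiased_def M_def by auto
  have sq: "sqrt (real 9) = 3" by (simp add: real_sqrt_eq_iff)
  have eq: "{b. b<n \<and> M a b \<noteq> 0} = {b. b<n \<and> odd (card {l. l<n \<and> W1 a l \<noteq> 0 \<and> W2 b l \<noteq> 0})}"
  proof (rule Collect_cong)
    fix b
    show "(b<n \<and> M a b \<noteq> 0) = (b<n \<and> odd (card {l. l<n \<and> W1 a l \<noteq> 0 \<and> W2 b l \<noteq> 0}))"
    proof (cases "b<n")
      case True
      obtain s where s: "(\<Sum>l<n. W1 a l * W2 b l) = of_int s"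
        "(even s \<longleftrightarrow> even (card {l. l<n \<and> W1 a l \<noteq> 0 \<and> W2 b l \<noteq> 0}))"
        using parity_sum[of n "W1 a" "W2 b"] wm_ent[OF W1] wm_ent[OF W2] a True by blast
      have Mab: "M a b = of_int s / 3" unfolding M_def using s(1) sq by simp
      have "M a b \<in> {1,-1,0}" using wm_ent[OF WM a True] .
      then have "s = 3 \<or> s = -3 \<or> s = 0" using Mab by auto
      then have "(M a b \<noteq> 0) = odd s" using Mab by auto
      then show ?thesis using s(2) True by simp
    qed simp
  qed
  show ?thesis using wm_row[OF WM a] eq by simp
qed

lemma par_help: "(c::nat) + n = 9 + 9 + z \<Longrightarrow> (odd c \<longleftrightarrow> (if even n then odd z else even z))"
  by presburger

lemma key: "card {l. l<n \<and> f l \<noteq> 0 \<and> g l \<noteq> 0} + n =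
  card {l. l<n \<and> f l \<noteq> 0} + card {l. l<n \<and> g l \<noteq> 0} + card {l. l<n \<and> f l = 0 \<and> g l = 0}"
  using cnt2[of n "\<lambda>l. f l \<noteq> 0" "\<lambda>l. g l \<noteq> 0"] by simp

lemma zcount: "card {l. l<n \<and> f l \<noteq> 0} + card {l. l<n \<and> f l = 0} = n"
  using cnt1[of n "\<lambda>l. f l \<noteq> 0"] by simp

lemma zcount_col: "card {l. l<n \<and> f l \<noteq> 0} + card {l. l<n \<and> f l = 0} = n"
  by (rule zcount)

lemma fam_of: assumes W: "weighing_matrix 12 9 W"
  shows "fam 12 (\<lambda>a. {l. l<12 \<and> W a l = 0})"
proof
  fix b assume b: "b < (12::nat)"
  have "card {l. l<12 \<and> W b l = 0} = 3" using zcount[of 12 "W b"] wm_row[OF W b] by simp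
  then show "{l. l<12 \<and> W b l = 0} \<subseteq> {..<12} \<and> card {l. l<12 \<and> W b l = 0} = 3" by auto
next
  fix b b' assume bb: "b < (12::nat)" "b' < 12" "b \<noteq> b'"
  have e: "even (card {l. l<12 \<and> W b l \<noteq> 0 \<and> W b' l \<noteq> 0})" by (rule wm_orth[OF W bb])
  have k: "card {l. l<12 \<and> W b l \<noteq> 0 \<and> W b' l \<noteq> 0} + 12 = 9 + 9 + card {l. l<12 \<and> W b l = 0 \<and> W b' l = 0}"
    using key[of 12 "W b" "W b'"] wm_row[OF W bb(1)] wm_row[OF W bb(2)] by simp
  have "{l. l<12 \<and> W b l = 0} \<inter> {l. l<12 \<and> W b' l = 0} = {l. l<12 \<and> W b l = 0 \<and> W b' l = 0}" by auto
  moreover have "even (card {l. l<12 \<and> W b l = 0 \<and> W b' l = 0})" using e par_help[OF k] by simp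
  ultimately show "even (card ({l. l<12 \<and> W b l = 0} \<inter> {l. l<12 \<and> W b' l = 0}))" by simp
next
  fix p assume p: "p < (12::nat)"
  have "{b. b<12 \<and> p \<in> {l. l<12 \<and> W b l = 0}} = {b. b<12 \<and> W b p = 0}" using p by auto
  moreover have "card {b. b<12 \<and> W b p = 0} = 3"
    using zcount[of 12 "\<lambda>b. W b p"] wm_col[OF W _ p] by simp
  ultimately show "card {b. b<12 \<and> p \<in> {l. l<12 \<and> W b l = 0}} = 3" by simp
qed

lemma nonexist: assumes n: "1 \<le> n" "n < 13" and U: "unbiased n 9 W1 W2" shows False
proof -
  have W1: "weighing_matrix n 9 W1" and W2: "weighing_matrix n 9 W2" using U unfolding unbiased_def by auto
  have n0: "0 < n" using n by simp
  have r0: "card {l. l<n \<and> W1 0 l \<noteq> 0} = 9" by (rule wm_row[OF W1 n0])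
  have "card {l. l<n \<and> W1 0 l \<noteq> 0} \<le> card {..<n}" by (rule card_mono) auto
  then have n9: "9 \<le> n" using r0 by simp
  have z0: "card {l. l<n \<and> W1 0 l = 0} = n - 9" using zcount[of n "W1 0"] r0 by simp
  consider "n = 9" | "n = 10" | "n = 11" | "n = 12" using n n9 by linarith
  then show False
  proof cases
    case 1
    have n1: "1 < n" using 1 by simp
    have e: "even (card {l. l<n \<and> W1 0 l \<noteq> 0 \<and> W1 1 l \<noteq> 0})" by (rule wm_orth[OF W1 n0 n1]) simp
    have k: "card {l. l<n \<and> W1 0 l \<noteq> 0 \<and> W1 1 l \<noteq> 0} + n = 9 + 9 + card {l. l<n \<and> W1 0 l = 0 \<and> W1 1 l = 0}"
      using key[of n "W1 0" "W1 1"] wm_row[OF W1 n0] wm_row[OF W1 n1] by simp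
    have le: "card {l. l<n \<and> W1 0 l = 0 \<and> W1 1 l = 0} \<le> card {l. l<n \<and> W1 0 l = 0}" by (rule card_mono) auto
    have zz: "card {l. l<n \<and> W1 0 l = 0} = 0" using z0 1 by simp
    have cz: "card {l. l<n \<and> W1 0 l = 0 \<and> W1 1 l = 0} = 0" using le zz by linarith
    have "card {l. l<n \<and> W1 0 l \<noteq> 0 \<and> W1 1 l \<noteq> 0} = 9" using k cz 1 by linarith
    then show False using e by simp
  next
    case 2
    have "card {l. l<n \<and> W1 0 l = 0} = 1" using z0 2 by simp
    then obtain p where p: "{l. l<n \<and> W1 0 l = 0} = {p}" using card_1_singletonE by blast
    then have pn: "p < n" by auto
    have sub: "{b. b<n \<and> odd (card {l. l<n \<and> W1 0 l \<noteq> 0 \<and> W2 b l \<noteq> 0})} \<subseteq> {b. b<n \<and> W2 b p = 0}"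
    proof
      fix b assume "b \<in> {b. b<n \<and> odd (card {l. l<n \<and> W1 0 l \<noteq> 0 \<and> W2 b l \<noteq> 0})}"
      then have b: "b<n" "odd (card {l. l<n \<and> W1 0 l \<noteq> 0 \<and> W2 b l \<noteq> 0})" by auto
      have k: "card {l. l<n \<and> W1 0 l \<noteq> 0 \<and> W2 b l \<noteq> 0} + n = 9 + 9 + card {l. l<n \<and> W1 0 l = 0 \<and> W2 b l = 0}"
        using key[of n "W1 0" "W2 b"] wm_row[OF W1 n0] wm_row[OF W2 b(1)] by simp
      have o: "odd (card {l. l<n \<and> W1 0 l = 0 \<and> W2 b l = 0})" using b(2) par_help[OF k] 2 by simp
      have "card {l. l<n \<and> W1 0 l = 0 \<and> W2 b l = 0} \<noteq> 0" using o by (metis dvd_0_right)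
      then obtain l where "l<n" "W1 0 l = 0" "W2 b l = 0"
        by (metis (mono_tags, lifting) card.empty empty_Collect_eq)
      then have "l = p" using p by blast
      then show "b \<in> {b. b<n \<and> W2 b p = 0}" using b \<open>W2 b l = 0\<close> by simp
    qed
    have "card {b. b<n \<and> W2 b p = 0} = 1"
      using zcount[of n "\<lambda>b. W2 b p"] wm_col[OF W2 _ pn] 2 by simp
    moreover have "card {b. b<n \<and> odd (card {l. l<n \<and> W1 0 l \<noteq> 0 \<and> W2 b l \<noteq> 0})} \<le> card {b. b<n \<and> W2 b p = 0}"
      by (rule card_mono[OF _ sub]) simp
    ultimately show False using unb_odd[OF U n0] by simp
  next
    case 3
    have "card {l. l<n \<and> W1 0 l = 0} = 2" using z0 3 by simp
    then obtain p q where pq: "{l. l<n \<and> W1 0 l = 0} = {p,q}" by (meson card_2_iff)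
    then have pqn: "p < n" "q < n" by auto
    have sub: "{..<n} \<subseteq> {a. a<n \<and> W1 a p = 0} \<union> {a. a<n \<and> W1 a q = 0}"
    proof
      fix a assume "a \<in> {..<n}"
      then have a: "a < n" by simp
      have "\<exists>l. l<n \<and> W1 0 l = 0 \<and> W1 a l = 0"
      proof (cases "a = 0")
        case True then show ?thesis using pq by auto
      next
        case False
        have e: "even (card {l. l<n \<and> W1 0 l \<noteq> 0 \<and> W1 a l \<noteq> 0})" by (rule wm_orth[OF W1 n0 a]) (use False in simp)
        have k: "card {l. l<n \<and> W1 0 l \<noteq> 0 \<and> W1 a l \<noteq> 0} + n = 9 + 9 + card {l. l<n \<and> W1 0 l = 0 \<and> W1 a l = 0}"
          using key[of n "W1 0" "W1 a"] wm_row[OF W1 n0] wm_row[OF W1 a] by simp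
        have o: "odd (card {l. l<n \<and> W1 0 l = 0 \<and> W1 a l = 0})" using e par_help[OF k] 3 by simp
        have "card {l. l<n \<and> W1 0 l = 0 \<and> W1 a l = 0} \<noteq> 0" using o by (metis dvd_0_right)
        then show ?thesis by (metis (mono_tags, lifting) card.empty empty_Collect_eq)
      qed
      then obtain l where l: "l<n" "W1 0 l = 0" "W1 a l = 0" by blast
      then have "l = p \<or> l = q" using pq by blast
      then show "a \<in> {a. a<n \<and> W1 a p = 0} \<union> {a. a<n \<and> W1 a q = 0}" using l a by auto
    qed
    have cp: "card {a. a<n \<and> W1 a p = 0} = 2"
      using zcount[of n "\<lambda>a. W1 a p"] wm_col[OF W1 _ pqn(1)] 3 by simp
    have cq: "card {a. a<n \<and> W1 a q = 0} = 2"
      using zcount[of n "\<lambda>a. W1 a q"] wm_col[OF W1 _ pqn(2)] 3 by simp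
    have "card {..<n} \<le> card ({a. a<n \<and> W1 a p = 0} \<union> {a. a<n \<and> W1 a q = 0})"
      by (rule card_mono[OF _ sub]) simp
    also have "\<dots> \<le> card {a. a<n \<and> W1 a p = 0} + card {a. a<n \<and> W1 a q = 0}" by (rule card_Un_le)
    finally show False using cp cq 3 by simp
  next
    case 4
    have W1': "weighing_matrix 12 9 W1" using W1 4 by simp
    have W2': "weighing_matrix 12 9 W2" using W2 4 by simp
    have U': "unbiased 12 9 W1 W2" using U 4 by simp
    let ?Z1 = "\<lambda>a. {l. l<12 \<and> W1 a l = 0}"
    let ?Z2 = "\<lambda>a. {l. l<12 \<and> W2 a l = 0}"
    have f1: "fam 12 ?Z1" by (rule fam_of[OF W1'])
    have f2: "fam 12 ?Z2" by (rule fam_of[OF W2'])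
    have F: "\<forall>a<12. \<forall>b<12. card (?Z1 a \<inter> ?Z2 b) \<le> 1"
    proof (intro allI impI)
      fix a b :: nat assume a: "a<12" and b: "b<12"
      interpret A: fam 12 ?Z1 by (rule f1)
      have Za: "?Z1 a \<subseteq> {..<12}" "card (?Z1 a) = 3" using A.Zc[OF a] by auto
      have eq: "{b. b<12 \<and> odd (card (?Z1 a \<inter> ?Z2 b))} =
                {b. b<12 \<and> odd (card {l. l<12 \<and> W1 a l \<noteq> 0 \<and> W2 b l \<noteq> 0})}"
      proof (rule Collect_cong)
        fix b
        show "(b<12 \<and> odd (card (?Z1 a \<inter> ?Z2 b))) = (b<12 \<and> odd (card {l. l<12 \<and> W1 a l \<noteq> 0 \<and> W2 b l \<noteq> 0}))"
        proof (cases "b<12")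
          case True
          have k: "card {l. l<12 \<and> W1 a l \<noteq> 0 \<and> W2 b l \<noteq> 0} + 12 = 9 + 9 + card {l. l<12 \<and> W1 a l = 0 \<and> W2 b l = 0}"
            using key[of 12 "W1 a" "W2 b"] wm_row[OF W1' a] wm_row[OF W2' True] by simp
          have "?Z1 a \<inter> ?Z2 b = {l. l<12 \<and> W1 a l = 0 \<and> W2 b l = 0}" by auto
          then show ?thesis using par_help[OF k] True by simp
        qed simp
      qed
      have o9: "card {b. b<12 \<and> odd (card (?Z1 a \<inter> ?Z2 b))} = 9"
        using unb_odd[OF U' a] eq by simp
      show "card (?Z1 a \<inter> ?Z2 b) \<le> 1" using Fder[OF f2 Za o9] b by blast
    qed
    show False by (rule comb12[OF f1 f2 F])
  qed
qed

theorem corollary6p3: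
  shows "(\<exists>W1 W2. unbiased 13 9 W1 W2) \<and>
         (\<forall>n::nat. 1 \<le> n \<and> n < 13 \<longrightarrow> \<not> (\<exists>W1 W2. unbiased n 9 W1 W2))"
  using existence nonexist by blast

end
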